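(* Let $\mathcal{G}=(V,\mathcal{E})$ be an $\ell$-uniform hypergraph with $m$ edges and $n$ vertices such that $n\ge3\ell$. Then there is a partition $V=V_1\dot\cup V_2$ with $|V_1|=\lfloor 2n/3\rfloor$ and $|V_2|=\lceil n/3\rceil$ such that at least $m\cdot\ell/2^{\ell+2}$ edges of $\mathcal{E}$ have exactly one vertex in $V_2$. *)

theory Defs
  imports Complex_Main
begin

definition uniform_hypergraph :: "nat \<Rightarrow> 'a set \<Rightarrow> 'a set set \<Rightarrow> bool" where
  "uniform_hypergraph l V E \<longleftrightarrow> finite V \<and> (\<forall>e\<in>E. e \<subseteq> V \<and> card e = l)"

end

theory Submission imports Defs begin

lemma binom_step:
  fixes a r :: nat assumes "2 * r \<le> a"
  shows "(a choose r) \<le> 2 * ((a - 1) choose r)"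
proof (cases "r = 0")
  case True thus ?thesis by simp
next
  case False
  hence pos: "a - r > 0" using assms by simp
  have "(a - r) * (a choose r) = a * ((a - 1) choose r)" by (rule binomial_absorb_comp)
  also have "\<dots> \<le> (2 * (a - r)) * ((a - 1) choose r)" using assms by (intro mult_right_mono) auto
  finally have "(a - r) * (a choose r) \<le> (a - r) * (2 * ((a - 1) choose r))" by simp
  thus ?thesis using pos by simp
qed

lemma binom_iter:
  fixes n r :: nat
  shows "j \<le> J \<Longrightarrow> 2 * r + J \<le> n \<Longrightarrow> (n choose r) \<le> 2 ^ j * ((n - j) choose r)"
proof (induction j)
  case 0 thus ?case by simp
next
  case (Suc j)
  have "(n - j choose r) \<le> 2 * ((n - j - 1) choose r)"
    using Suc.prems by (intro binom_step) auto
  hence "(n choose r) \<le> 2 ^ j * (2 * ((n - j - 1) choose r))"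
    using Suc by (meson Suc_leD le_trans mult_le_mono2)
  thus ?case by (simp add: mult_ac)
qed

lemma count_lower:
  fixes V e :: "'a set" and k :: nat
  assumes "finite V" "e \<subseteq> V" "k \<ge> 1"
  shows "card e * ((card V - card e) choose (k - 1)) \<le> card {S. S \<subseteq> V \<and> card S = k \<and> card (e \<inter> S) = 1}"
proof -
  have fe: "finite e" using assms finite_subset by blast
  let ?D = "e \<times> {T. T \<subseteq> V - e \<and> card T = k - 1}"
  let ?h = "\<lambda>(x, T). insert x T"
  have cD: "card ?D = card e * ((card V - card e) choose (k - 1))"
    using assms fe by (simp add: card_cartesian_product n_subsets card_Diff_subset)
  have inj: "inj_on ?h ?D"
  proof (rule inj_onI, clarify)
    fix x T x' T'
    assume a: "x \<in> e" "T \<subseteq> V - e" "x' \<in> e" "T' \<subseteq> V - e" "insert x T = insert x' T'"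
    have "e \<inter> insert x T = {x}" "e \<inter> insert x' T' = {x'}" using a by auto
    hence xx: "x = x'" using a(5) by auto
    have "T = insert x T - e" "T' = insert x' T' - e" using a by auto
    thus "x = x' \<and> T = T'" using xx a(5) by simp
  qed
  have sub: "?h ` ?D \<subseteq> {S. S \<subseteq> V \<and> card S = k \<and> card (e \<inter> S) = 1}"
  proof clarify
    fix x T assume a: "x \<in> e" "T \<subseteq> V - e" "card T = k - 1"
    have fT: "finite T" using a assms finite_subset by blast
    have "x \<notin> T" using a by auto
    hence "card (insert x T) = k" using a fT assms by simp
    moreover have "e \<inter> insert x T = {x}" using a by auto
    hence "card (e \<inter> insert x T) = 1" by simp
    moreover have "insert x T \<subseteq> V" using a assms by auto
    ultimately show "insert x T \<subseteq> V \<and> card (insert x T) = k \<and> card (e \<inter> insert x T) = 1"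
      by blast
  qed
  have fin: "finite {S. S \<subseteq> V \<and> card S = k \<and> card (e \<inter> S) = 1}" using assms by simp
  have "card ?D = card (?h ` ?D)" using inj by (simp add: card_image)
  also have "\<dots> \<le> card {S. S \<subseteq> V \<and> card S = k \<and> card (e \<inter> S) = 1}"
    by (rule card_mono[OF fin sub])
  finally show ?thesis using cD by simp
qed

theorem propositionB1:
  fixes V :: "'a set" and E :: "'a set set" and l n m :: nat
  assumes "uniform_hypergraph l V E"
    and "card V = n" and "card E = m"
    and "n \<ge> 3 * l"
  shows "\<exists>V1 V2. V1 \<union> V2 = V \<and> V1 \<inter> V2 = {}
           \<and> card V1 = nat \<lfloor>2 * real n / 3\<rfloor> \<and> card V2 = nat \<lceil>real n / 3\<rceil>
           \<and> real (card {e\<in>E. card (e \<inter> V2) = 1}) \<ge> real m * real l / 2 ^ (l + 2)"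
proof -
  have finV: "finite V" and Esub: "\<And>e. e \<in> E \<Longrightarrow> e \<subseteq> V \<and> card e = l"
    using assms(1) unfolding uniform_hypergraph_def by auto
  have finE: "finite E" using Esub finV
  proof -
    have "E \<subseteq> Pow V" using Esub by auto
    thus ?thesis using finV finite_subset by blast
  qed
  define k where "k = (n + 2) div 3"
  have k1: "3 * k \<le> n + 2" "n \<le> 3 * k" unfolding k_def by auto
  have ceil: "nat \<lceil>real n / 3\<rceil> = k"
  proof -
    have "\<lceil>real n / 3\<rceil> = int k" using k1 by (intro ceiling_unique) auto
    thus ?thesis by simp
  qed
  have flo: "nat \<lfloor>2 * real n / 3\<rfloor> = n - k"
  proof -
    have "\<lfloor>2 * real n / 3\<rfloor> = int (n - k)" using k1 by (intro floor_unique) (auto simp: of_nat_diff)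
    thus ?thesis by simp
  qed
  let ?K = "{S. S \<subseteq> V \<and> card S = k}"
  define f where "f S = card {e\<in>E. card (e \<inter> S) = 1}" for S
  have finK: "finite ?K" using finV by simp
  have Kne: "?K \<noteq> {}"
  proof -
    have "k \<le> card V" using k1 assms(2) by simp
    then obtain S where "S \<subseteq> V" "card S = k" using obtain_subset_with_card_n by metis
    thus ?thesis by blast
  qed
  have "Max (f ` ?K) \<in> f ` ?K" using finK Kne by (intro Max_in) auto
  then obtain S where SK: "S \<in> ?K" and SM: "f S = Max (f ` ?K)" by (metis (no_types, lifting) imageE)
  have Smax: "\<And>T. T \<in> ?K \<Longrightarrow> f T \<le> f S" unfolding SM using finK by (intro Max_ge) auto
  have main: "2 ^ (l + 2) * f S \<ge> m * l"
  proof (cases "l = 0")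
    case True thus ?thesis by simp
  next
    case False
    hence kpos: "k \<ge> 1" using k1 assms(4) by auto
    define c where "c = (n - l) choose (k - 1)"
    have cpos: "c > 0" unfolding c_def using k1 assms(4) by simp
    have "(\<Sum>S\<in>?K. f S) = (\<Sum>S\<in>?K. \<Sum>e\<in>E. if card (e \<inter> S) = 1 then 1 else 0)"
      unfolding f_def using finE by (simp add: sum.inter_filter[symmetric])
    also have "\<dots> = (\<Sum>e\<in>E. \<Sum>S\<in>?K. if card (e \<inter> S) = 1 then 1 else 0)" by (rule sum.swap)
    also have "\<dots> = (\<Sum>e\<in>E. card {S\<in>?K. card (e \<inter> S) = 1})"
      using finK by (simp add: sum.inter_filter[symmetric])
    also have "\<dots> \<ge> (\<Sum>e\<in>E. l * c)"
    proof (rule sum_mono)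
      fix e assume "e \<in> E"
      hence "e \<subseteq> V" "card e = l" using Esub by auto
      hence "l * c \<le> card {S. S \<subseteq> V \<and> card S = k \<and> card (e \<inter> S) = 1}"
        using count_lower[OF finV _ kpos, of e] assms(2) unfolding c_def by simp
      moreover have "{S. S \<subseteq> V \<and> card S = k \<and> card (e \<inter> S) = 1} = {S\<in>?K. card (e \<inter> S) = 1}" by auto
      ultimately show "l * c \<le> card {S\<in>?K. card (e \<inter> S) = 1}" by simp
    qed
    finally have A: "m * (l * c) \<le> (\<Sum>S\<in>?K. f S)" using assms(3) by simp
    have B: "(\<Sum>S\<in>?K. f S) \<le> card ?K * f S" using Smax sum_bounded_above[of ?K f "f S"] by simp
    have cK: "card ?K = n choose k" using n_subsets[OF finV] assms(2) by simp
    have C1: "(n - 1 choose (k - 1)) \<le> 2 ^ (l - 1) * ((n - 1 - (l - 1)) choose (k - 1))"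
      using binom_iter[of "l - 1" "l - 1" "k - 1" "n - 1"] k1 assms(4) False by auto
    have "n - 1 - (l - 1) = n - l" using False by simp
    hence C1': "(n - 1 choose (k - 1)) \<le> 2 ^ (l - 1) * c" using C1 unfolding c_def by simp
    have "k * (n choose k) = n * ((n - 1) choose (k - 1))"
      using binomial_absorption[of "k - 1" n] kpos by simp
    also have "\<dots> \<le> (3 * k) * ((n - 1) choose (k - 1))" using k1 by simp
    finally have "(n choose k) \<le> 3 * ((n - 1) choose (k - 1))" using kpos by simp
    also have "\<dots> \<le> 3 * (2 ^ (l - 1) * c)" using C1' by simp
    also have "\<dots> \<le> 2 ^ (l + 2) * c"
    proof -
      obtain j where "l = Suc j" using False not0_implies_Suc by blast
      hence "(2::nat) ^ (l + 2) = 2 ^ (l - 1) * 8" by simp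
      thus ?thesis by simp
    qed
    finally have D: "(n choose k) \<le> 2 ^ (l + 2) * c" .
    have "c * (m * l) \<le> card ?K * f S" using A B by (simp add: mult_ac)
    also have "\<dots> \<le> 2 ^ (l + 2) * c * f S" using D cK by simp
    finally have "c * (m * l) \<le> c * (2 ^ (l + 2) * f S)" by (simp add: mult_ac)
    thus ?thesis using cpos by simp
  qed
  show ?thesis
  proof (intro exI conjI)
    show "(V - S) \<union> S = V" using SK by auto
    show "(V - S) \<inter> S = {}" by auto
    have "S \<subseteq> V" "card S = k" using SK by auto
    hence "card (V - S) = n - k" using finV assms(2) by (metis card_Diff_subset finite_subset)
    thus "card (V - S) = nat \<lfloor>2 * real n / 3\<rfloor>" using flo by simp
    show "card S = nat \<lceil>real n / 3\<rceil>" using SK ceil by simp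
    have "real (m * l) \<le> real (2 ^ (l + 2) * f S)" using main by linarith
    hence "real m * real l \<le> 2 ^ (l + 2) * real (f S)" by simp
    thus "real m * real l / 2 ^ (l + 2) \<le> real (card {e\<in>E. card (e \<inter> S) = 1})"
      unfolding f_def by (simp add: divide_le_eq mult.commute)
  qed
qed

end
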